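(* Let $T\in\mathbf B_m(\Omega)$ with $0\in\Omega$, let $S\in\{T\}'$ and $n\ge1$. Then $S|_{\ker T^n}=0$ if and only if $\widetilde\Phi_S(\lambda)=\lambda^n\Psi(\lambda)$ for some $m\times m$ matrix-valued function $\Psi$ analytic in a neighbourhood of $0$.
   Context: $\mathcal H$ is a complex separable Hilbert space. For a connected open $\Omega\subset\mathbb C$ and integer $m\ge1$, $\mathbf B_m(\Omega)$ is the set of $T\in\mathcal B(\mathcal H)$ with: $\Omega\subset\sigma(T)$; $\operatorname{Ran}(T-w)=\mathcal H$ for $w\in\Omega$; $\bigvee_{w\in\Omega}\ker(T-w)=\mathcal H$; $\dim\ker(T-w)=m$ for $w\in\Omega$. $\mathcal N_\lambda=\ker(T-\lambda)$. Fix holomorphic $\gamma_1,\dots,\gamma_m:\Omega\to\mathcal H$ with $\{\gamma_j(\lambda)\}$ a basis of $\mathcal N_\lambda$ for each $\lambda$, and $\rho(\lambda):\mathbb C^m\to\mathcal N_\lambda$, $\rho(\lambda)e_j=\gamma_j(\lambda)$. $\{T\}'$ is the commutant of $T$; for $S\in\{T\}'$, $\Phi_S(\lambda)=S|_{\mathcal N_\lambda}:\mathcal N_\lambda\to\mathcal N_\lambda$, and $\widetilde\Phi_S(\lambda)=\rho(\lambda)^{-1}\Phi_S(\lambda)\rho(\lambda)$, an analytic $m\times m$ matrix function on $\Omega$ (so $S\rho(\lambda)=\rho(\lambda)\widetilde\Phi_S(\lambda)$). *)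

theory Defs
  imports "HOL-Analysis.Analysis"
begin

text \<open>A complex separable Hilbert space, carried by a type 'a of class banach
(which supplies the norm, metric, topology and completeness), together with a
complex scalar multiplication sc extending the real one and an inner product ip
inducing the norm.\<close>

definition complex_hilbert :: "(complex \<Rightarrow> 'a::banach \<Rightarrow> 'a) \<Rightarrow> ('a \<Rightarrow> 'a \<Rightarrow> complex) \<Rightarrow> bool" where
  "complex_hilbert sc ip \<longleftrightarrow>
     vector_space sc \<and>
     (\<forall>r x. sc (complex_of_real r) x = r *\<^sub>R x) \<and>
     (\<forall>x y z. ip (x + y) z = ip x z + ip y z) \<and>
     (\<forall>c x y. ip (sc c x) y = c * ip x y) \<and>
     (\<forall>x y. ip y x = cnj (ip x y)) \<and>
     (\<forall>x. norm x = sqrt (Re (ip x x)))"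

definition separable_sp :: "'a::metric_space itself \<Rightarrow> bool" where
  "separable_sp _ \<longleftrightarrow> (\<exists>D::'a set. countable D \<and> closure D = UNIV)"

definition bdd_op :: "(complex \<Rightarrow> 'a::banach \<Rightarrow> 'a) \<Rightarrow> ('a \<Rightarrow> 'a) \<Rightarrow> bool" where
  "bdd_op sc T \<longleftrightarrow> bounded_linear T \<and> (\<forall>c x. T (sc c x) = sc c (T x))"

definition shift_op :: "(complex \<Rightarrow> 'a::banach \<Rightarrow> 'a) \<Rightarrow> ('a \<Rightarrow> 'a) \<Rightarrow> complex \<Rightarrow> 'a \<Rightarrow> 'a" where
  "shift_op sc T w = (\<lambda>x. T x - sc w x)"

definition op_ker :: "('a \<Rightarrow> 'b::zero) \<Rightarrow> 'a set" where
  "op_ker A = {x. A x = 0}"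

definition op_spectrum :: "(complex \<Rightarrow> 'a::banach \<Rightarrow> 'a) \<Rightarrow> ('a \<Rightarrow> 'a) \<Rightarrow> complex set" where
  "op_spectrum sc T = {w. \<not> (\<exists>R. bdd_op sc R \<and> R \<circ> shift_op sc T w = id \<and> shift_op sc T w \<circ> R = id)}"

definition cowen_douglas :: "(complex \<Rightarrow> 'a::banach \<Rightarrow> 'a) \<Rightarrow> 'm::finite itself \<Rightarrow> complex set \<Rightarrow> ('a \<Rightarrow> 'a) \<Rightarrow> bool" where
  "cowen_douglas sc _ \<Omega> T \<longleftrightarrow>
     bdd_op sc T \<and>
     \<Omega> \<subseteq> op_spectrum sc T \<and>
     (\<forall>w\<in>\<Omega>. range (shift_op sc T w) = UNIV) \<and>
     closure (module.span sc (\<Union>w\<in>\<Omega>. op_ker (shift_op sc T w))) = UNIV \<and>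
     (\<forall>w\<in>\<Omega>. vector_space.dim sc (op_ker (shift_op sc T w)) = CARD('m))"

definition vholo_on :: "(complex \<Rightarrow> 'a::banach \<Rightarrow> 'a) \<Rightarrow> (complex \<Rightarrow> 'a) \<Rightarrow> complex set \<Rightarrow> bool" where
  "vholo_on sc g U \<longleftrightarrow>
     (\<forall>z\<in>U. \<exists>d. ((\<lambda>h. sc (1 / h) (g (z + h) - g z)) \<longlongrightarrow> d) (at 0))"

definition rho :: "(complex \<Rightarrow> 'a::banach \<Rightarrow> 'a) \<Rightarrow> ('m::finite \<Rightarrow> complex \<Rightarrow> 'a) \<Rightarrow> complex \<Rightarrow> complex^'m \<Rightarrow> 'a" where
  "rho sc \<gamma> z v = (\<Sum>j\<in>UNIV. sc (v $ j) (\<gamma> j z))"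

definition PhiT :: "(complex \<Rightarrow> 'a::banach \<Rightarrow> 'a) \<Rightarrow> ('m::finite \<Rightarrow> complex \<Rightarrow> 'a) \<Rightarrow> ('a \<Rightarrow> 'a) \<Rightarrow> complex \<Rightarrow> complex^'m^'m" where
  "PhiT sc \<gamma> S z = (THE M. \<forall>v. S (rho sc \<gamma> z v) = rho sc \<gamma> z (M *v v))"

end

theory Submission
  imports Defs
begin


locale hil =
  fixes sc :: "complex \<Rightarrow> 'a::banach \<Rightarrow> 'a" and ip :: "'a \<Rightarrow> 'a \<Rightarrow> complex"
  assumes CH: "complex_hilbert sc ip"
begin

lemma vs: "vector_space sc" using CH unfolding complex_hilbert_def by blast
sublocale vs: vector_space sc by (rule vs)

lemma sc_real: "sc (complex_of_real r) x = r *\<^sub>R x" using CH unfolding complex_hilbert_def by blast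
lemma ip_add_left: "ip (x + y) z = ip x z + ip y z" using CH unfolding complex_hilbert_def by blast
lemma ip_scale_left: "ip (sc c x) y = c * ip x y" using CH unfolding complex_hilbert_def by blast
lemma ip_conj: "ip y x = cnj (ip x y)" using CH unfolding complex_hilbert_def by blast
lemma ip_norm: "norm x = sqrt (Re (ip x x))" using CH unfolding complex_hilbert_def by blast

lemma ip_zero_left[simp]: "ip 0 z = 0"
  using ip_add_left[of 0 0 z] by simp
lemma ip_minus_left: "ip (- x) z = - ip x z"
proof -
  have "ip x z + ip (- x) z = 0" using ip_add_left[of x "-x" z] by simp
  thus ?thesis by (simp add: add_eq_0_iff)
qed
lemma ip_diff_left: "ip (x - y) z = ip x z - ip y z"
  using ip_add_left[of x "-y" z] ip_minus_left[of y z] by simp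
lemma ip_sum_left: "ip (\<Sum>i\<in>A. f i) z = (\<Sum>i\<in>A. ip (f i) z)"
  by (induction A rule: infinite_finite_induct) (auto simp: ip_add_left)
lemma ip_add_right: "ip z (x + y) = ip z x + ip z y"
  by (metis ip_add_left ip_conj complex_cnj_add)
lemma ip_scale_right: "ip x (sc c y) = cnj c * ip x y"
  by (metis ip_scale_left ip_conj complex_cnj_mult)
lemma ip_zero_right[simp]: "ip z 0 = 0"
  using ip_add_right[of z 0 0] by simp
lemma ip_sum_right: "ip z (\<Sum>i\<in>A. f i) = (\<Sum>i\<in>A. ip z (f i))"
  by (induction A rule: infinite_finite_induct) (auto simp: ip_add_right)
lemma ip_minus_right: "ip z (- x) = - ip z x"
  by (metis ip_conj ip_minus_left complex_cnj_minus)
lemma ip_diff_right: "ip z (x - y) = ip z x - ip z y"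
  using ip_add_right[of z x "-y"] ip_minus_right[of z y] by simp

lemma ip_self: "ip x x = complex_of_real ((norm x)\<^sup>2)"
proof -
  have im: "Im (ip x x) = 0" using ip_conj[of x x] by (metis cnj.sel(2) neg_equal_zero)
  have "norm x \<ge> 0" by simp
  hence "Re (ip x x) \<ge> 0" using ip_norm[of x]
    by (metis linorder_not_le real_sqrt_lt_0_iff)
  hence "(norm x)\<^sup>2 = Re (ip x x)" using ip_norm[of x] by simp
  thus ?thesis using im by (simp add: complex_eq_iff)
qed

lemma ip_self_eq0: "ip x x = 0 \<Longrightarrow> x = 0"
  using ip_self[of x] by simp

lemma ip_self_Re: "Re (ip x x) = (norm x)\<^sup>2"
  using ip_self[of x] by (metis Re_complex_of_real)

lemma Re_ip: "Re (ip x y) = ((norm (x + y))\<^sup>2 - (norm (x - y))\<^sup>2) / 4"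
proof -
  have a: "(norm (x + y))\<^sup>2 = Re (ip x x + ip x y + ip y x + ip y y)"
    unfolding ip_self_Re[symmetric] by (simp add: ip_add_left ip_add_right)
  have b: "(norm (x - y))\<^sup>2 = Re (ip x x - ip x y - ip y x + ip y y)"
    unfolding ip_self_Re[symmetric] by (simp add: ip_diff_left ip_diff_right)
  have c: "Re (ip y x) = Re (ip x y)" using ip_conj[of x y] by simp
  show ?thesis using a b c by simp
qed

lemma ip_decomp: "ip x y = complex_of_real (Re (ip x y)) + \<i> * complex_of_real (Re (ip x (sc \<i> y)))"
  by (simp add: ip_scale_right complex_eq_iff)

lemma tendsto_ip_left:
  assumes "(f \<longlongrightarrow> l) F"
  shows "((\<lambda>x. ip (f x) y) \<longlongrightarrow> ip l y) F"
proof -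
  have e: "ip z y = complex_of_real (((norm (z + y))\<^sup>2 - (norm (z - y))\<^sup>2) / 4)
      + \<i> * complex_of_real (((norm (z + sc \<i> y))\<^sup>2 - (norm (z - sc \<i> y))\<^sup>2) / 4)" for z
    using ip_decomp[of z y] Re_ip[of z y] Re_ip[of z "sc \<i> y"] by simp
  show ?thesis unfolding e by (intro tendsto_intros assms) auto
qed

lemma sc_diff: "sc c (x - y) = sc c x - sc c y" by (rule vs.scale_right_diff_distrib)

end



lemma om_baire:
  fixes f :: "'a::banach \<Rightarrow> 'b::banach"
  assumes "bounded_linear f" "surj f"
  shows "\<exists>k::nat. interior (closure (f ` ball 0 (real k))) \<noteq> {}"
proof (rule ccontr)
  assume "\<not> ?thesis"
  hence e: "\<And>k::nat. interior (closure (f ` ball 0 (real k))) = {}" by blast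
  let ?G = "range (\<lambda>k::nat. closure (f ` ball 0 (real k)))"
  have "euclidean interior_of \<Union>?G = {}"
  proof (rule Baire_category_alt)
    show "completely_metrizable_space (euclidean::'b topology) \<or>
      locally_compact_space (euclidean::'b topology) \<and> regular_space (euclidean::'b topology)"
      using completely_metrizable_space_euclidean by blast
    show "countable ?G" by simp
    fix T assume "T \<in> ?G"
    then obtain k where k: "T = closure (f ` ball 0 (real k))" by blast
    show "closedin euclidean T \<and> euclidean interior_of T = {}"
      unfolding k using e[of k] by simp
  qed
  moreover have "\<Union>?G = UNIV"
  proof -
    have "y \<in> \<Union>?G" for y
    proof -
      obtain x where x: "y = f x" using assms(2) by (metis surjD)
      obtain k::nat where "norm x < real k" using reals_Archimedean2 by blast
      hence "y \<in> closure (f ` ball 0 (real k))" using x closure_subset by fastforce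
      thus ?thesis by blast
    qed
    thus ?thesis by blast
  qed
  ultimately show False by simp
qed

lemma om_approx:
  fixes f :: "'a::banach \<Rightarrow> 'b::banach"
  assumes "bounded_linear f" "surj f"
  shows "\<exists>M>0. \<forall>y \<delta>. \<delta> > 0 \<longrightarrow> (\<exists>x. norm x \<le> M * norm y \<and> norm (y - f x) < \<delta>)"
proof -
  interpret f: bounded_linear f by fact
  obtain k::nat where "interior (closure (f ` ball 0 (real k))) \<noteq> {}" using om_baire assms by blast
  then obtain y0 where "y0 \<in> interior (closure (f ` ball 0 (real k)))" by blast
  then obtain \<epsilon> where \<epsilon>: "\<epsilon> > 0" "ball y0 \<epsilon> \<subseteq> closure (f ` ball 0 (real k))"
    by (meson open_contains_ball open_interior interior_subset subset_trans)
  have B: "\<exists>x. norm x < 2 * real k \<and> norm (y - f x) < \<delta>" if "norm y < \<epsilon>" "\<delta> > 0" for y \<delta>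
  proof -
    have "y0 \<in> closure (f ` ball 0 (real k))" using \<epsilon> by auto
    hence "\<exists>z\<in>f ` ball 0 (real k). dist z y0 < \<delta>/2"
      using closure_approachable[of _ "f ` ball 0 (real k)"] \<open>\<delta> > 0\<close> half_gt_zero by blast
    then obtain a where a: "a \<in> ball 0 (real k)" "dist (f a) y0 < \<delta>/2" by blast
    have "y0 + y \<in> ball y0 \<epsilon>" using that by (simp add: dist_norm)
    hence "y0 + y \<in> closure (f ` ball 0 (real k))" using \<epsilon> by auto
    hence "\<exists>z\<in>f ` ball 0 (real k). dist z (y0 + y) < \<delta>/2"
      using closure_approachable[of _ "f ` ball 0 (real k)"] \<open>\<delta> > 0\<close> half_gt_zero by blast
    then obtain b where b: "b \<in> ball 0 (real k)" "dist (f b) (y0 + y) < \<delta>/2" by blast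
    have "norm (b - a) \<le> norm b + norm a" by (rule norm_triangle_ineq4)
    also have "\<dots> < 2 * real k" using a b by simp
    finally have 1: "norm (b - a) < 2 * real k" .
    have "y - f (b - a) = (y0 + y - f b) - (y0 - f a)" by (simp add: f.diff algebra_simps)
    hence "norm (y - f (b - a)) \<le> norm (y0 + y - f b) + norm (y0 - f a)"
      by (metis norm_triangle_ineq4)
    also have "\<dots> < \<delta>" using a(2) b(2) by (simp add: dist_norm norm_minus_commute)
    finally show ?thesis using 1 by blast
  qed
  define M where "M = 4 * real k / \<epsilon> + 1"
  have "4 * real k / \<epsilon> \<ge> 0" using \<epsilon> by simp
  hence M: "M > 0" by (simp add: M_def)
  have "\<exists>x. norm x \<le> M * norm y \<and> norm (y - f x) < \<delta>" if dpos: "\<delta> > 0" for y \<delta>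
  proof (cases "y = 0")
    case True thus ?thesis using dpos by (intro exI[of _ 0]) auto
  next
    case False
    define t where "t = \<epsilon> / (2 * norm y)"
    have t: "t > 0" using False \<epsilon> by (simp add: t_def)
    have "norm (t *\<^sub>R y) = \<epsilon>/2" using False \<epsilon> by (simp add: t_def)
    hence "norm (t *\<^sub>R y) < \<epsilon>" using \<epsilon> by simp
    then obtain x' where x': "norm x' < 2 * real k" "norm (t *\<^sub>R y - f x') < t * \<delta>"
      using B[of "t *\<^sub>R y" "t * \<delta>"] t dpos by auto
    define x where "x = (1/t) *\<^sub>R x'"
    have "norm x = norm x' / t" using t by (simp add: x_def)
    also have "\<dots> \<le> 2 * real k / t" using x' t by (simp add: divide_right_mono)
    also have "\<dots> = 4 * real k / \<epsilon> * norm y" using False \<epsilon> by (simp add: t_def field_simps)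
    also have "\<dots> \<le> M * norm y"
    proof -
      have "M * norm y = 4 * real k / \<epsilon> * norm y + norm y" by (simp add: M_def distrib_right)
      thus ?thesis using norm_ge_zero[of y] by linarith
    qed
    finally have 1: "norm x \<le> M * norm y" .
    have "y - f x = (1/t) *\<^sub>R (t *\<^sub>R y - f x')" using t by (simp add: x_def f.scaleR algebra_simps)
    hence "norm (y - f x) = norm (t *\<^sub>R y - f x') / t" using t by simp
    also have "\<dots> < \<delta>" using x' t by (simp add: divide_less_eq mult.commute)
    finally show ?thesis using 1 by blast
  qed
  thus ?thesis using M by blast
qed

lemma open_mapping_bound:
  fixes f :: "'a::banach \<Rightarrow> 'b::banach"
  assumes "bounded_linear f" "surj f"
  shows "\<exists>C>0. \<forall>y. \<exists>x. f x = y \<and> norm x \<le> C * norm y"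
proof -
  interpret f: bounded_linear f by fact
  obtain M where M: "M > 0" "\<And>y \<delta>. \<delta> > 0 \<Longrightarrow> \<exists>x. norm x \<le> M * norm y \<and> norm (y - f x) < \<delta>"
    using om_approx[OF assms] by blast
  define g where "g = (\<lambda>y \<delta>. SOME x. norm x \<le> M * norm y \<and> norm (y - f x) < \<delta>)"
  have g: "norm (g y \<delta>) \<le> M * norm y \<and> norm (y - f (g y \<delta>)) < \<delta>" if "\<delta> > 0" for y \<delta>
    unfolding g_def by (rule someI_ex) (use M(2)[OF that] in blast)
  have "\<exists>x. f x = y \<and> norm x \<le> (2 * M) * norm y" for y
  proof (cases "y = 0")
    case True thus ?thesis by (intro exI[of _ 0]) auto
  next
    case False
    hence ny: "norm y > 0" by simp
    define ys where "ys = rec_nat y (\<lambda>k z. z - f (g z (norm y / 2 ^ Suc k)))"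
    have ys0: "ys 0 = y" by (simp add: ys_def)
    define xs where "xs = (\<lambda>k. g (ys k) (norm y / 2 ^ Suc k))"
    have ysS: "ys (Suc k) = ys k - f (xs k)" for k by (simp add: ys_def xs_def)
    have ysb: "norm (ys k) \<le> norm y / 2 ^ k" for k
    proof (cases k)
      case 0 thus ?thesis by (simp add: ys0)
    next
      case (Suc j)
      have pos: "norm y / 2 ^ Suc j > 0" using ny by simp
      have "norm (ys (Suc j)) < norm y / 2 ^ Suc j"
        unfolding ysS xs_def using g[OF pos, of "ys j"] by blast
      thus ?thesis using Suc by simp
    qed
    have xsb: "norm (xs k) \<le> M * norm y * (1/2) ^ k" for k
    proof -
      have pos: "norm y / 2 ^ Suc k > 0" using ny by simp
      have "norm (xs k) \<le> M * norm (ys k)" unfolding xs_def using g[OF pos, of "ys k"] by blast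
      also have "\<dots> \<le> M * (norm y / 2 ^ k)" using mult_left_mono[OF ysb[of k], of M] M by simp
      finally show ?thesis by (simp add: power_one_over)
    qed
    have sg: "summable (\<lambda>k. M * norm y * (1/2::real) ^ k)"
      by (intro summable_mult summable_geometric) simp
    have sn: "summable (\<lambda>k. norm (xs k))"
      by (rule summable_comparison_test[OF _ sg]) (use xsb in auto)
    hence sx: "summable xs" by (rule summable_norm_cancel)
    have yl: "ys \<longlonglongrightarrow> 0"
    proof -
      have "(\<lambda>k. norm y * (1/2::real) ^ k) \<longlonglongrightarrow> norm y * 0"
        by (intro tendsto_intros) simp
      hence "(\<lambda>k. norm y * (1/2::real) ^ k) \<longlonglongrightarrow> 0" by simp
      moreover have "norm (ys k) \<le> norm y * (1/2) ^ k" for k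
        using ysb[of k] by (simp add: power_one_over)
      ultimately show ?thesis
        using Lim_null_comparison[OF always_eventually] by metis
    qed
    have "(\<lambda>k. ys k - ys (Suc k)) sums (ys 0 - 0)" by (rule telescope_sums'[OF yl])
    hence "(\<lambda>k. f (xs k)) sums y" using ysS ys0 by simp
    moreover have "f (suminf xs) = (\<Sum>k. f (xs k))" by (rule f.suminf[OF sx])
    ultimately have 1: "f (suminf xs) = y" by (simp add: sums_iff)
    have "norm (suminf xs) \<le> (\<Sum>k. norm (xs k))" by (rule summable_norm[OF sn])
    also have "\<dots> \<le> (\<Sum>k. M * norm y * (1/2) ^ k)" by (rule suminf_le[OF xsb sn sg])
    also have "\<dots> = M * norm y * 2" using suminf_geometric[of "1/2::real"]
      by (simp add: suminf_mult)
    finally show ?thesis using 1 by (auto simp: algebra_simps)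
  qed
  moreover have "2 * M > 0" using M by simp
  ultimately show ?thesis by blast
qed




lemma hol_det:
  fixes F :: "complex \<Rightarrow> 'n::finite \<Rightarrow> 'n \<Rightarrow> complex"
  assumes "\<And>i j. (\<lambda>z. F z i j) holomorphic_on S"
  shows "(\<lambda>z. det (\<chi> i j. F z i j)) holomorphic_on S"
proof -
  have e: "det (\<chi> i j. F z i j) = (\<Sum>p\<in>{p. p permutes (UNIV::'n set)}. of_int (sign p) * (\<Prod>i\<in>UNIV. F z i (p i)))" for z
    by (simp add: det_def)
  show ?thesis unfolding e
    by (intro holomorphic_on_sum holomorphic_on_mult holomorphic_on_const holomorphic_on_prod assms)
qed

lemma bl_diff: assumes "bounded_linear f" shows "f (x - y) = f x - f y"
proof - interpret bounded_linear f by fact show ?thesis by (rule diff) qed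
lemma bl_add: assumes "bounded_linear f" shows "f (x + y) = f x + f y"
proof - interpret bounded_linear f by fact show ?thesis by (rule add) qed
lemma bl_scaleR: assumes "bounded_linear f" shows "f (r *\<^sub>R x) = r *\<^sub>R f x"
proof - interpret bounded_linear f by fact show ?thesis by (rule scaleR) qed

lemma cont_agree:
  fixes f g :: "complex \<Rightarrow> complex"
  assumes "isCont f a" "isCont g a" "open U" "a \<in> U" "\<And>z. z \<in> U \<Longrightarrow> z \<noteq> a \<Longrightarrow> f z = g z"
  shows "f a = g a"
proof -
  have ev: "eventually (\<lambda>z. g z = f z) (at a)"
    using assms(3,4,5) by (auto simp: eventually_at_topological)
  have "(g \<longlongrightarrow> g a) (at a)" using assms(2) isCont_def by blast
  hence "(f \<longlongrightarrow> g a) (at a)" using ev by (rule Lim_transform_eventually)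
  moreover have "(f \<longlongrightarrow> f a) (at a)" using assms(1) isCont_def by blast
  ultimately show ?thesis using tendsto_unique[OF at_neq_bot] by metis
qed

locale cdl = hil sc ip for sc :: "complex \<Rightarrow> 'a::banach \<Rightarrow> 'a" and ip +
  fixes \<Omega> :: "complex set" and T :: "'a \<Rightarrow> 'a" and \<gamma> :: "'m::finite \<Rightarrow> complex \<Rightarrow> 'a"
  assumes \<Omega>o: "open \<Omega>" and \<Omega>0: "0 \<in> \<Omega>"
    and Tcd: "cowen_douglas sc TYPE('m) \<Omega> T"
    and holo: "\<And>j. vholo_on sc (\<gamma> j) \<Omega>"
    and basis: "\<And>w. w \<in> \<Omega> \<Longrightarrow>
        inj (\<lambda>j. \<gamma> j w) \<and>
        \<not> vs.dependent (range (\<lambda>j. \<gamma> j w)) \<and>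
        vs.span (range (\<lambda>j. \<gamma> j w)) = op_ker (shift_op sc T w)"
begin

abbreviation "\<rho> \<equiv> rho sc \<gamma>"

lemma Tbdd: "bdd_op sc T" using Tcd by (simp add: cowen_douglas_def)
lemma Tlin: "bounded_linear T" using Tbdd by (simp add: bdd_op_def)
lemma Tsc: "T (sc c x) = sc c (T x)" using Tbdd by (simp add: bdd_op_def)
lemma Tsurj: "surj T"
proof -
  have "range (shift_op sc T 0) = UNIV" using Tcd \<Omega>0 by (simp add: cowen_douglas_def)
  moreover have "shift_op sc T 0 = T" by (simp add: shift_op_def fun_eq_iff)
  ultimately show ?thesis by simp
qed

lemma ker_iff: "x \<in> op_ker (shift_op sc T w) \<longleftrightarrow> T x = sc w x"
  by (simp add: op_ker_def shift_op_def)

lemma T0: "T 0 = 0" using Tlin by (simp add: linear_simps)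
lemma Tn0: "(T ^^ n) 0 = 0" by (induction n) (auto simp: T0)
lemma funpowS: "(T ^^ Suc n) x = (T ^^ n) (T x)" by (simp add: funpow_swap1)

lemma gam_ker: "w \<in> \<Omega> \<Longrightarrow> T (\<gamma> j w) = sc w (\<gamma> j w)"
  using basis[of w] vs.span_base[of "\<gamma> j w" "range (\<lambda>j. \<gamma> j w)"] ker_iff by auto

lemma rho_def': "\<rho> w v = (\<Sum>j\<in>UNIV. sc (v $ j) (\<gamma> j w))" by (simp add: rho_def)

lemma T_sum: "T (\<Sum>j\<in>A. f j) = (\<Sum>j\<in>A. T (f j))"
  using Tlin by (simp add: linear_sum bounded_linear.linear)

lemma rho_ker: "w \<in> \<Omega> \<Longrightarrow> T (\<rho> w v) = sc w (\<rho> w v)"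
  by (simp add: rho_def' T_sum Tsc gam_ker vs.scale_sum_right mult.commute)

lemma rho_Tn: "w \<in> \<Omega> \<Longrightarrow> (T ^^ n) (\<rho> w v) = sc (w ^ n) (\<rho> w v)"
  by (induction n) (simp_all add: rho_ker Tsc mult.commute)

lemma rho_diff: "\<rho> w (a - b) = \<rho> w a - \<rho> w b"
  by (simp add: rho_def' vs.scale_left_diff_distrib sum_subtractf)

lemma rho_scale: "sc c (\<rho> w a) = \<rho> w (c *s a)"
  by (simp add: rho_def' vs.scale_sum_right)

lemma rho_zero: "\<rho> w 0 = 0" by (simp add: rho_def')

lemma sum_range_inj:
  assumes "inj g"
  shows "(\<Sum>v\<in>range g. h v) = (\<Sum>j\<in>UNIV. h (g j))"
  using sum.reindex[of g UNIV h] assms by simp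

lemma rho_inj:
  assumes w: "w \<in> \<Omega>" and z: "\<rho> w v = 0" shows "v = 0"
proof (rule ccontr)
  assume nz: "v \<noteq> 0"
  let ?g = "\<lambda>j. \<gamma> j w"
  have inj: "inj ?g" using basis[OF w] by blast
  define u where "u = (\<lambda>x. v $ (inv ?g x))"
  have "\<exists>j. v $ j \<noteq> 0" using nz by (simp add: vec_eq_iff)
  then obtain j where j: "v $ j \<noteq> 0" by blast
  have "u (?g j) \<noteq> 0" using j inv_f_f[OF inj, of j] by (simp add: u_def)
  have iv: "inv ?g (?g i) = i" for i using inv_f_f[OF inj, of i] by simp
  have "(\<Sum>x\<in>range ?g. sc (u x) x) = 0"
    using z inj by (simp add: sum_range_inj u_def rho_def' iv)
  moreover have fin: "finite (range ?g)" by simp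
  ultimately have "vs.dependent (range ?g)"
    unfolding vs.dependent_finite[OF fin] using \<open>u (?g j) \<noteq> 0\<close> by blast
  thus False using basis[OF w] by blast
qed

lemma rho_onto:
  assumes w: "w \<in> \<Omega>" and x: "T x = sc w x" shows "\<exists>v. x = \<rho> w v"
proof -
  let ?g = "\<lambda>j. \<gamma> j w"
  have inj: "inj ?g" using basis[OF w] by blast
  have "x \<in> vs.span (range ?g)" using basis[OF w] x ker_iff by blast
  then obtain u where "x = (\<Sum>v\<in>range ?g. sc (u v) v)"
    using vs.span_finite[of "range ?g"] by auto
  hence "x = \<rho> w (\<chi> j. u (?g j))" using inj by (simp add: sum_range_inj rho_def')
  thus ?thesis by blast
qed

lemma PhiT_eq:
  assumes w: "w \<in> \<Omega>" and M: "\<And>v. R (\<rho> w v) = \<rho> w (M *v v)"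
  shows "PhiT sc \<gamma> R w = M"
  unfolding PhiT_def
proof (rule the_equality)
  show "\<forall>v. R (\<rho> w v) = \<rho> w (M *v v)" using M by blast
  fix M' assume M': "\<forall>v. R (\<rho> w v) = \<rho> w (M' *v v)"
  have "M' *v v = M *v v" for v
  proof -
    have "\<rho> w (M' *v v - M *v v) = 0" using M M' by (simp add: rho_diff)
    hence "M' *v v - M *v v = 0" by (rule rho_inj[OF w])
    thus ?thesis by simp
  qed
  thus "M' = M" by (simp add: matrix_eq)
qed

definition "comm R \<longleftrightarrow> bdd_op sc R \<and> R \<circ> T = T \<circ> R"

lemma comm_lin: "comm R \<Longrightarrow> bounded_linear R" by (simp add: comm_def bdd_op_def)
lemma comm_sc: "comm R \<Longrightarrow> R (sc c x) = sc c (R x)" by (simp add: comm_def bdd_op_def)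
lemma comm_T: "comm R \<Longrightarrow> R (T x) = T (R x)" by (simp add: comm_def fun_eq_iff)

lemma R_sum: "comm R \<Longrightarrow> R (\<Sum>j\<in>A. f j) = (\<Sum>j\<in>A. R (f j))"
  using comm_lin by (simp add: linear_sum bounded_linear.linear)

lemma PhiT_prop:
  assumes R: "comm R" and w: "w \<in> \<Omega>"
  shows "R (\<rho> w v) = \<rho> w (PhiT sc \<gamma> R w *v v)"
proof -
  have "\<exists>c. R (\<gamma> j w) = \<rho> w c" for j
  proof (rule rho_onto[OF w])
    show "T (R (\<gamma> j w)) = sc w (R (\<gamma> j w))"
      using comm_T[OF R] comm_sc[OF R] gam_ker[OF w] by metis
  qed
  then obtain c where c: "\<And>j. R (\<gamma> j w) = \<rho> w (c j)" by metis
  define M where "M = (\<chi> i j. c j $ i)"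
  have "R (\<rho> w v) = \<rho> w (M *v v)" for v
  proof -
    have "R (\<rho> w v) = (\<Sum>j\<in>UNIV. sc (v $ j) (\<rho> w (c j)))"
      by (simp add: rho_def' R_sum[OF R] comm_sc[OF R] c)
    also have "\<dots> = (\<Sum>j\<in>UNIV. \<Sum>i\<in>UNIV. sc (v $ j * c j $ i) (\<gamma> i w))"
      by (simp add: rho_def' vs.scale_sum_right)
    also have "\<dots> = (\<Sum>i\<in>UNIV. \<Sum>j\<in>UNIV. sc (v $ j * c j $ i) (\<gamma> i w))"
      by (rule sum.swap)
    also have "\<dots> = \<rho> w (M *v v)"
      by (simp add: rho_def' M_def matrix_vector_mult_def vs.scale_sum_left mult.commute)
    finally show ?thesis .
  qed
  hence "PhiT sc \<gamma> R w = M" by (rule PhiT_eq[OF w])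
  thus ?thesis using \<open>\<And>v. R (\<rho> w v) = \<rho> w (M *v v)\<close> by simp
qed

lemma rho_axis: "\<rho> w (axis j 1) = \<gamma> j w"
proof -
  have "\<rho> w (axis j 1) = (\<Sum>i\<in>UNIV. if i = j then \<gamma> j w else 0)"
    unfolding rho_def' by (rule sum.cong) (auto simp: axis_def)
  thus ?thesis by simp
qed

lemma R_gam:
  assumes R: "comm R" and w: "w \<in> \<Omega>"
  shows "R (\<gamma> j w) = (\<Sum>i\<in>UNIV. sc (PhiT sc \<gamma> R w $ i $ j) (\<gamma> i w))"
proof -
  have "R (\<gamma> j w) = \<rho> w (PhiT sc \<gamma> R w *v axis j 1)"
    using PhiT_prop[OF R w, of "axis j 1"] by (simp add: rho_axis)
  also have "\<dots> = (\<Sum>i\<in>UNIV. sc (PhiT sc \<gamma> R w $ i $ j) (\<gamma> i w))"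
    unfolding rho_def' by (simp add: matrix_vector_mult_def axis_def if_distrib cong: if_cong)
  finally show ?thesis .
qed

lemma PhiT_factor:
  assumes S: "comm S" and R: "comm R" and f: "\<And>x. S x = R ((T ^^ n) x)" and w: "w \<in> \<Omega>"
  shows "PhiT sc \<gamma> S w = (\<chi> i j. w ^ n * PhiT sc \<gamma> R w $ i $ j)"
proof (rule PhiT_eq[OF w])
  fix v
  have "S (\<rho> w v) = sc (w ^ n) (R (\<rho> w v))" using f rho_Tn[OF w] comm_sc[OF R] by simp
  also have "\<dots> = \<rho> w ((w ^ n) *s (PhiT sc \<gamma> R w *v v))" by (simp add: PhiT_prop[OF R w] rho_scale)
  also have "(w ^ n) *s (PhiT sc \<gamma> R w *v v) = (\<chi> i j. w ^ n * PhiT sc \<gamma> R w $ i $ j) *v v"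
    by (simp add: vec_eq_iff matrix_vector_mult_def sum_distrib_left mult.assoc)
  finally show "S (\<rho> w v) = \<rho> w ((\<chi> i j. w ^ n * PhiT sc \<gamma> R w $ i $ j) *v v)" .
qed

end
context cdl
begin

lemma hol_ip:
  assumes g: "vholo_on sc g \<Omega>"
  shows "(\<lambda>w. ip (g w) y) holomorphic_on \<Omega>"
proof -
  have "(\<lambda>w. ip (g w) y) field_differentiable at z" if z: "z \<in> \<Omega>" for z
  proof -
    obtain d where d: "((\<lambda>h. sc (1 / h) (g (z + h) - g z)) \<longlongrightarrow> d) (at 0)"
      using g z by (auto simp: vholo_on_def)
    have "((\<lambda>h. ip (sc (1 / h) (g (z + h) - g z)) y) \<longlongrightarrow> ip d y) (at 0)"
      by (rule tendsto_ip_left[OF d])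
    moreover have "ip (sc (1 / h) (g (z + h) - g z)) y = (ip (g (z + h)) y - ip (g z) y) / h" for h
      by (simp add: ip_scale_left ip_diff_left divide_inverse mult.commute)
    ultimately have "((\<lambda>w. ip (g w) y) has_field_derivative ip d y) (at z)"
      by (simp add: DERIV_def)
    thus ?thesis by (auto simp: field_differentiable_def)
  qed
  thus ?thesis using \<Omega>o by (simp add: holomorphic_on_def field_differentiable_at_within)
qed

lemma vholo_R:
  assumes R: "comm R" and g: "vholo_on sc g \<Omega>"
  shows "vholo_on sc (\<lambda>w. R (g w)) \<Omega>"
  unfolding vholo_on_def
proof
  fix z assume z: "z \<in> \<Omega>"
  obtain d where d: "((\<lambda>h. sc (1 / h) (g (z + h) - g z)) \<longlongrightarrow> d) (at 0)"
    using g z by (auto simp: vholo_on_def)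
  have "((\<lambda>h. R (sc (1 / h) (g (z + h) - g z))) \<longlongrightarrow> R d) (at 0)"
    by (rule bounded_linear.tendsto[OF comm_lin[OF R] d])
  moreover have "R (sc (1 / h) (g (z + h) - g z)) = sc (1 / h) (R (g (z + h)) - R (g z))" for h
    using comm_sc[OF R] bl_diff[OF comm_lin[OF R]] by simp
  ultimately show "\<exists>d. ((\<lambda>h. sc (1 / h) (R (g (z + h)) - R (g z))) \<longlongrightarrow> d) (at 0)" by auto
qed

definition "Am z = (\<chi> k i. ip (\<gamma> i z) (\<gamma> k 0))"

lemma det_A0: "det (Am 0) \<noteq> 0"
proof -
  have "x = 0" if x: "Am 0 *v x = 0" for x
  proof -
    have k: "ip (\<rho> 0 x) (\<gamma> k 0) = 0" for k
    proof -
      have "ip (\<rho> 0 x) (\<gamma> k 0) = (Am 0 *v x) $ k"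
        by (simp add: rho_def' ip_sum_left ip_scale_left Am_def matrix_vector_mult_def mult.commute)
      thus ?thesis using x by simp
    qed
    have "ip (\<rho> 0 x) (\<rho> 0 x) = 0"
      by (simp add: rho_def' ip_sum_right ip_scale_right k[unfolded rho_def'])
    hence "\<rho> 0 x = 0" by (rule ip_self_eq0)
    thus ?thesis using rho_inj[OF \<Omega>0] by blast
  qed
  hence "invertible (Am 0)"
    unfolding invertible_left_inverse matrix_left_invertible_ker by blast
  thus ?thesis by (simp add: invertible_det_nz)
qed

lemma Phi_holo:
  assumes R: "comm R"
  shows "\<exists>V. open V \<and> 0 \<in> V \<and> V \<subseteq> \<Omega> \<and> (\<forall>i j. (\<lambda>z. PhiT sc \<gamma> R z $ i $ j) holomorphic_on V)"
proof -
  define Bm where "Bm z = (\<chi> k j. ip (R (\<gamma> j z)) (\<gamma> k 0))" for z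
  have hA: "(\<lambda>z. ip (\<gamma> i z) (\<gamma> k 0)) holomorphic_on \<Omega>" for i k by (rule hol_ip[OF holo])
  have hB: "(\<lambda>z. ip (R (\<gamma> i z)) (\<gamma> k 0)) holomorphic_on \<Omega>" for i k
    by (rule hol_ip[OF vholo_R[OF R holo]])
  have hdet: "(\<lambda>z. det (Am z)) holomorphic_on \<Omega>"
    unfolding Am_def by (rule hol_det) (simp add: hA)
  have hnum: "(\<lambda>z. det (\<chi> p q. if q = i then Bm z $ p $ j else Am z $ p $ q)) holomorphic_on \<Omega>" for i j :: 'm
  proof (rule hol_det)
    fix p q :: 'm show "(\<lambda>z. if q = i then Bm z $ p $ j else Am z $ p $ q) holomorphic_on \<Omega>"
      by (cases "q = i") (simp_all add: Am_def Bm_def hA hB)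
  qed
  define V where "V = \<Omega> \<inter> (\<lambda>z. det (Am z)) -` (- {0})"
  have oV: "open V" unfolding V_def
    by (rule continuous_open_preimage[OF holomorphic_on_imp_continuous_on[OF hdet] \<Omega>o]) (rule open_Compl, rule closed_singleton)
  have 0: "0 \<in> V" using \<Omega>0 det_A0 by (simp add: V_def)
  have VO: "V \<subseteq> \<Omega>" by (simp add: V_def)
  have eq: "PhiT sc \<gamma> R z $ i $ j = det (\<chi> p q. if q = i then Bm z $ p $ j else Am z $ p $ q) / det (Am z)"
    if z: "z \<in> V" for z i j
  proof -
    have zO: "z \<in> \<Omega>" using z VO by blast
    have nz: "det (Am z) \<noteq> 0" using z by (simp add: V_def)
    let ?M = "PhiT sc \<gamma> R z"
    let ?x = "\<chi> r. ?M $ r $ j"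
    have colB: "(Am z *v ?x) $ p = Bm z $ p $ j" for p
    proof -
      have "Bm z $ p $ j = ip (\<Sum>i\<in>UNIV. sc (?M $ i $ j) (\<gamma> i z)) (\<gamma> p 0)"
        by (simp add: Bm_def R_gam[OF R zO])
      also have "\<dots> = (Am z *v ?x) $ p"
        by (simp add: ip_sum_left ip_scale_left Am_def matrix_vector_mult_def mult.commute)
      finally show ?thesis by simp
    qed
    have "(\<chi> p q. if q = i then Bm z $ p $ j else Am z $ p $ q) =
           (\<chi> p q. if q = i then (Am z *v ?x) $ p else Am z $ p $ q)" by (simp only: colB)
    hence "det (\<chi> p q. if q = i then Bm z $ p $ j else Am z $ p $ q) = ?x $ i * det (Am z)"
      using cramer_lemma[where A="Am z" and k=i and x="?x"] by simp
    thus ?thesis using nz by simp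
  qed
  have "(\<lambda>z. PhiT sc \<gamma> R z $ i $ j) holomorphic_on V" for i j
  proof -
    have "(\<lambda>z. det (\<chi> p q. if q = i then Bm z $ p $ j else Am z $ p $ q) / det (Am z)) holomorphic_on V"
      using holomorphic_on_subset[OF hnum VO] holomorphic_on_subset[OF hdet VO]
      by (intro holomorphic_on_divide) (auto simp: V_def)
    thus ?thesis using eq holomorphic_cong by (metis (no_types, lifting))
  qed
  thus ?thesis using oV 0 VO by blast
qed

lemma factor1:
  assumes S: "comm S" and k: "\<And>x. T x = 0 \<Longrightarrow> S x = 0"
  shows "\<exists>R. comm R \<and> (\<forall>x. S x = R (T x))"
proof -
  obtain C where C: "C > 0" "\<And>y. \<exists>x. T x = y \<and> norm x \<le> C * norm y"
    using open_mapping_bound[OF Tlin Tsurj] by blast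
  have Sl: "bounded_linear S" by (rule comm_lin[OF S])
  define pre where "pre y = (SOME x. T x = y)" for y
  have pre: "T (pre y) = y" for y unfolding pre_def by (rule someI_ex) (use Tsurj in \<open>metis surjD\<close>)
  define R where "R y = S (pre y)" for y
  have Rw: "R y = S x" if "T x = y" for x y
  proof -
    have "T (pre y - x) = 0" using pre that Tlin by (simp add: bl_diff)
    hence "S (pre y - x) = 0" by (rule k)
    thus ?thesis using Sl by (simp add: R_def bl_diff)
  qed
  have RT: "S x = R (T x)" for x using Rw by simp
  obtain K where K: "\<And>x. norm (S x) \<le> norm x * K" "K > 0"
    using bounded_linear.pos_bounded[OF Sl] by blast
  have lin: "bounded_linear R"
  proof (rule bounded_linear_intro[where K="C * K"])
    fix a b show "R (a + b) = R a + R b"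
      using Rw[of "pre a + pre b" "a + b"] pre Tlin Sl by (simp add: R_def bl_add linear_simps)
  next
    fix r a show "R (r *\<^sub>R a) = r *\<^sub>R R a"
      using Rw[of "r *\<^sub>R pre a" "r *\<^sub>R a"] pre Tlin Sl by (simp add: R_def bl_scaleR linear_simps)
  next
    fix y
    obtain x where x: "T x = y" "norm x \<le> C * norm y" using C by blast
    have "norm (R y) = norm (S x)" using Rw[OF x(1)] by simp
    also have "\<dots> \<le> norm x * K" by (rule K)
    also have "\<dots> \<le> C * norm y * K" using x(2) K(2) by (simp add: mult_right_mono)
    finally show "norm (R y) \<le> norm y * (C * K)" by (simp add: algebra_simps)
  qed
  have Rsc: "R (sc c y) = sc c (R y)" for c y
    using Rw[of "sc c (pre y)" "sc c y"] pre Tsc comm_sc[OF S] by (simp add: R_def)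
  have Rc: "R (T y) = T (R y)" for y
  proof -
    have "R (T y) = S (T (pre y))" using Rw[of "T (pre y)" "T y"] pre by simp
    also have "\<dots> = T (S (pre y))" using comm_T[OF S] .
    also have "\<dots> = T (R y)" by (simp add: R_def)
    finally show ?thesis .
  qed
  have "comm R" using lin Rsc Rc by (simp add: comm_def bdd_op_def fun_eq_iff)
  thus ?thesis using RT by blast
qed

lemma factor_n:
  "comm S \<Longrightarrow> (\<forall>x. (T ^^ n) x = 0 \<longrightarrow> S x = 0) \<Longrightarrow> \<exists>R. comm R \<and> (\<forall>x. S x = R ((T ^^ n) x))"
proof (induction n arbitrary: S)
  case 0 thus ?case by auto
next
  case (Suc n)
  have "S x = 0" if "T x = 0" for x
    using Suc.prems(2) that Tn0 funpowS by metis
  then obtain R1 where R1: "comm R1" "\<And>x. S x = R1 (T x)" using factor1[OF Suc.prems(1)] by blast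
  have "R1 y = 0" if "(T ^^ n) y = 0" for y
  proof -
    obtain x where "y = T x" using Tsurj by (metis surjD)
    thus ?thesis using Suc.prems(2) that R1(2) funpowS by metis
  qed
  then obtain R where "comm R" "\<And>x. R1 x = R ((T ^^ n) x)" using Suc.IH[OF R1(1)] by blast
  thus ?case using R1(2) by (intro exI[of _ R]) (simp add: funpowS funpow_swap1)
qed

lemma forward:
  assumes S: "comm S" and k: "\<forall>x. (T ^^ n) x = 0 \<longrightarrow> S x = 0"
  shows "\<exists>\<Psi> :: complex \<Rightarrow> complex^'m^'m. \<exists>U. open U \<and> 0 \<in> U \<and> U \<subseteq> \<Omega> \<and>
            (\<forall>i j. (\<lambda>z. \<Psi> z $ i $ j) holomorphic_on U) \<and>
            (\<forall>w\<in>U. PhiT sc \<gamma> S w = (\<chi> i j. w ^ n * \<Psi> w $ i $ j))"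
proof -
  obtain R where R: "comm R" "\<And>x. S x = R ((T ^^ n) x)" using factor_n[OF S k] by blast
  obtain V where V: "open V" "0 \<in> V" "V \<subseteq> \<Omega>" "\<forall>i j. (\<lambda>z. PhiT sc \<gamma> R z $ i $ j) holomorphic_on V"
    using Phi_holo[OF R(1)] by blast
  have "\<forall>w\<in>V. PhiT sc \<gamma> S w = (\<chi> i j. w ^ n * PhiT sc \<gamma> R w $ i $ j)"
    using PhiT_factor[OF S R(1) R(2)] V(3) by blast
  thus ?thesis using V by blast
qed

lemma backward:
  "comm S \<Longrightarrow> open U \<Longrightarrow> 0 \<in> U \<Longrightarrow> U \<subseteq> \<Omega> \<Longrightarrow> (\<forall>i j. (\<lambda>z. \<Psi> z $ i $ j) holomorphic_on U) \<Longrightarrow>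
   (\<forall>w\<in>U. PhiT sc \<gamma> S w = (\<chi> i j. w ^ n * \<Psi> w $ i $ j)) \<Longrightarrow> \<forall>x. (T ^^ n) x = 0 \<longrightarrow> S x = 0"
proof (induction n arbitrary: S U)
  case 0 thus ?case using comm_lin[OF 0(1)] by (simp add: linear_simps)
next
  case (Suc n)
  note S = Suc.prems(1)
  have P0: "PhiT sc \<gamma> S 0 = 0" using Suc.prems(3,6) by (simp add: vec_eq_iff)
  have "S x = 0" if "T x = 0" for x
  proof -
    have "T x = sc 0 x" using that by simp
    then obtain v where "x = \<rho> 0 v" using rho_onto[OF \<Omega>0] by blast
    thus ?thesis using PhiT_prop[OF S \<Omega>0, of v] P0 by (simp add: rho_zero)
  qed
  then obtain R where R: "comm R" "\<And>x. S x = R (T x)" using factor1[OF S] by blast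
  have R1: "S x = R ((T ^^ 1) x)" for x using R(2) by simp
  obtain V where V: "open V" "0 \<in> V" "V \<subseteq> \<Omega>" "\<forall>i j. (\<lambda>z. PhiT sc \<gamma> R z $ i $ j) holomorphic_on V"
    using Phi_holo[OF R(1)] by blast
  define U' where "U' = U \<inter> V"
  have U': "open U'" "0 \<in> U'" "U' \<subseteq> \<Omega>" using V Suc.prems(2,3,4) by (auto simp: U'_def)
  have nz: "PhiT sc \<gamma> R w $ i $ j = w ^ n * \<Psi> w $ i $ j" if w: "w \<in> U'" "w \<noteq> 0" for w i j
  proof -
    have wO: "w \<in> \<Omega>" using w U' by blast
    have "PhiT sc \<gamma> S w $ i $ j = w * PhiT sc \<gamma> R w $ i $ j"
      using PhiT_factor[OF S R(1) R1 wO] by simp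
    moreover have "PhiT sc \<gamma> S w $ i $ j = w ^ Suc n * \<Psi> w $ i $ j"
      using Suc.prems(6) w by (simp add: U'_def)
    ultimately show ?thesis using w(2) by simp
  qed
  have eq: "PhiT sc \<gamma> R w $ i $ j = w ^ n * \<Psi> w $ i $ j" if w: "w \<in> U'" for w i j
  proof (cases "w = 0")
    case False thus ?thesis using nz w by blast
  next
    case True
    have c1: "isCont (\<lambda>z. PhiT sc \<gamma> R z $ i $ j) 0"
      using V(4) V(1) V(2) holomorphic_on_imp_continuous_on continuous_on_eq_continuous_at by blast
    have "(\<lambda>z. \<Psi> z $ i $ j) holomorphic_on U'" by (metis Suc.prems(5) holomorphic_on_subset Int_lower1 U'_def)
    hence c0: "isCont (\<lambda>z. \<Psi> z $ i $ j) 0"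
      using U'(1,2) holomorphic_on_imp_continuous_on continuous_on_eq_continuous_at by blast
    have c2: "isCont (\<lambda>z. z ^ n * \<Psi> z $ i $ j) 0" by (rule isCont_mult[OF _ c0]) (intro continuous_intros)
    show ?thesis using cont_agree[OF c1 c2 U'(1,2)] nz True by blast
  qed
  have "\<forall>i j. (\<lambda>z. \<Psi> z $ i $ j) holomorphic_on U'" by (metis Suc.prems(5) holomorphic_on_subset Int_lower1 U'_def)
  moreover have "\<forall>w\<in>U'. PhiT sc \<gamma> R w = (\<chi> i j. w ^ n * \<Psi> w $ i $ j)"
    using eq by (simp add: vec_eq_iff)
  ultimately have k: "\<forall>x. (T ^^ n) x = 0 \<longrightarrow> R x = 0" using Suc.IH[OF R(1) U'] by blast
  show ?case using k R(2) funpowS by metis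
qed

end

theorem lemma5p4:
  fixes sc :: "complex \<Rightarrow> 'a::banach \<Rightarrow> 'a"
    and ip :: "'a \<Rightarrow> 'a \<Rightarrow> complex"
    and \<Omega> :: "complex set"
    and T S :: "'a \<Rightarrow> 'a"
    and \<gamma> :: "'m::finite \<Rightarrow> complex \<Rightarrow> 'a"
    and n :: nat
  assumes H: "complex_hilbert sc ip" "separable_sp TYPE('a)"
    and \<Omega>: "open \<Omega>" "connected \<Omega>" "0 \<in> \<Omega>"
    and T: "cowen_douglas sc TYPE('m) \<Omega> T"
    and \<gamma>_holo: "\<And>j. vholo_on sc (\<gamma> j) \<Omega>"
    and \<gamma>_basis: "\<And>w. w \<in> \<Omega> \<Longrightarrow>
        inj (\<lambda>j. \<gamma> j w) \<and>
        \<not> module.dependent sc (range (\<lambda>j. \<gamma> j w)) \<and>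
        module.span sc (range (\<lambda>j. \<gamma> j w)) = op_ker (shift_op sc T w)"
    and S: "bdd_op sc S" "S \<circ> T = T \<circ> S"
    and n: "n \<ge> 1"
  shows "(\<forall>x. (T ^^ n) x = 0 \<longrightarrow> S x = 0) \<longleftrightarrow>
         (\<exists>\<Psi> :: complex \<Rightarrow> complex^'m^'m. \<exists>U. open U \<and> 0 \<in> U \<and> U \<subseteq> \<Omega> \<and>
            (\<forall>i j. (\<lambda>z. \<Psi> z $ i $ j) holomorphic_on U) \<and>
            (\<forall>w\<in>U. PhiT sc \<gamma> S w = (\<chi> i j. w ^ n * \<Psi> w $ i $ j)))"
proof -
  have L: "cdl sc ip \<Omega> T \<gamma>"
    by (intro cdl.intro hil.intro cdl_axioms.intro) (simp_all add: H \<Omega> T \<gamma>_holo \<gamma>_basis)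
  interpret cdl sc ip \<Omega> T \<gamma> by (rule L)
  have S': "comm S" using S by (simp add: comm_def)
  show ?thesis
  proof
    assume "\<forall>x. (T ^^ n) x = 0 \<longrightarrow> S x = 0"
    thus "\<exists>\<Psi> :: complex \<Rightarrow> complex^'m^'m. \<exists>U. open U \<and> 0 \<in> U \<and> U \<subseteq> \<Omega> \<and>
            (\<forall>i j. (\<lambda>z. \<Psi> z $ i $ j) holomorphic_on U) \<and>
            (\<forall>w\<in>U. PhiT sc \<gamma> S w = (\<chi> i j. w ^ n * \<Psi> w $ i $ j))"
      by (rule forward[OF S'])
  next
    assume "\<exists>\<Psi> :: complex \<Rightarrow> complex^'m^'m. \<exists>U. open U \<and> 0 \<in> U \<and> U \<subseteq> \<Omega> \<and>
            (\<forall>i j. (\<lambda>z. \<Psi> z $ i $ j) holomorphic_on U) \<and>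
            (\<forall>w\<in>U. PhiT sc \<gamma> S w = (\<chi> i j. w ^ n * \<Psi> w $ i $ j))"
    then obtain \<Psi> :: "complex \<Rightarrow> complex^'m^'m" and U where
      U: "open U" "0 \<in> U" "U \<subseteq> \<Omega>" "\<forall>i j. (\<lambda>z. \<Psi> z $ i $ j) holomorphic_on U"
         "\<forall>w\<in>U. PhiT sc \<gamma> S w = (\<chi> i j. w ^ n * \<Psi> w $ i $ j)" by blast
    show "\<forall>x. (T ^^ n) x = 0 \<longrightarrow> S x = 0" by (rule backward[OF S' U])
  qed
qed

end
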